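(* Let $\Sigma=\{a,b\}$ with the discrete topology, and let $B$ send a topology $\tau$ on $\Sigma^*$ to the topology generated by the sets $UV$ with $U\subseteq\Sigma$ and $V\in\tau$. Then $B$ is a refinement function over $\Sigma^*$.
   Context: $UV=\{uv:u\in U,v\in V\}$ (concatenation). A topological space is Noetherian if every subset is compact. A refinement function over a set $X$ is a map $R$ from topologies on $X$ to topologies on $X$ that is monotone for inclusion ($\tau\subseteq\tau'\Rightarrow R(\tau)\subseteq R(\tau')$) and sends Noetherian topologies to Noetherian topologies. *)

theory Defs
  imports "HOL-Analysis.Analysis"
begin

text \<open>The alphabet Sigma = {a, b}; words are lists over it, so Sigma* = UNIV.\<close>
datatype sigma = a | b

definition conc :: "'c list set \<Rightarrow> 'c list set \<Rightarrow> 'c list set" where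
  "conc U V = {u @ v | u v. u \<in> U \<and> v \<in> V}"

definition letters :: "'c set \<Rightarrow> 'c list set" where
  "letters U = {[x] | x. x \<in> U}"

definition noetherian_space :: "'x topology \<Rightarrow> bool" where
  "noetherian_space T \<longleftrightarrow> (\<forall>S. S \<subseteq> topspace T \<longrightarrow> compactin T S)"

definition refinement_function :: "'x set \<Rightarrow> ('x topology \<Rightarrow> 'x topology) \<Rightarrow> bool" where
  "refinement_function X R \<longleftrightarrow>
     (\<forall>\<tau>. topspace \<tau> = X \<longrightarrow> topspace (R \<tau>) = X) \<and>
     (\<forall>\<tau> \<tau>'. topspace \<tau> = X \<and> topspace \<tau>' = X \<and> (\<forall>S. openin \<tau> S \<longrightarrow> openin \<tau>' S)
         \<longrightarrow> (\<forall>S. openin (R \<tau>) S \<longrightarrow> openin (R \<tau>') S)) \<and>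
     (\<forall>\<tau>. topspace \<tau> = X \<and> noetherian_space \<tau> \<longrightarrow> noetherian_space (R \<tau>))"

text \<open>B(tau): the topology on Sigma* generated by the sets UV, U a set of letters, V open in tau
  (the whole space Sigma* being open by convention of "topology on Sigma*").\<close>
definition B :: "sigma list topology \<Rightarrow> sigma list topology" where
  "B \<tau> = topology_generated_by
          (insert UNIV {conc (letters U) V | U V. U \<subseteq> (UNIV :: sigma set) \<and> openin \<tau> V})"

end

theory Submission
  imports Defs
begin

definition fVW :: "sigma list set \<Rightarrow> sigma list set \<Rightarrow> sigma list set" where
  "fVW V W = {x. case x of [] \<Rightarrow> False | c # v \<Rightarrow> (case c of a \<Rightarrow> v \<in> V | b \<Rightarrow> v \<in> W)}"

lemma fVW_mem: "x \<in> fVW V W \<longleftrightarrow> (\<exists>v. x = a # v \<and> v \<in> V) \<or> (\<exists>v. x = b # v \<and> v \<in> W)"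
  unfolding fVW_def by (cases x; auto split: sigma.splits list.splits)

lemma conc_mem: "x \<in> conc (letters U) V \<longleftrightarrow> (\<exists>c v. x = c # v \<and> c \<in> U \<and> v \<in> V)"
proof
  assume "x \<in> conc (letters U) V" then show "\<exists>c v. x = c # v \<and> c \<in> U \<and> v \<in> V"
    unfolding conc_def letters_def by auto
next
  assume "\<exists>c v. x = c # v \<and> c \<in> U \<and> v \<in> V"
  then obtain c v where "x = [c] @ v" "c \<in> U" "v \<in> V" by auto
  then show "x \<in> conc (letters U) V" unfolding conc_def letters_def by blast
qed

lemma basis_fVW: "conc (letters U) V = fVW (if a \<in> U then V else {}) (if b \<in> U then V else {})"
proof (rule set_eqI)
  fix x show "x \<in> conc (letters U) V \<longleftrightarrow> x \<in> fVW (if a \<in> U then V else {}) (if b \<in> U then V else {})"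
  proof (cases x)
    case Nil then show ?thesis by (simp add: conc_mem fVW_mem)
  next
    case (Cons c v) then show ?thesis by (cases c) (auto simp: conc_mem fVW_mem)
  qed
qed

lemma gen_mono:
  assumes "generate_topology_on S X" "S \<subseteq> S'"
  shows "generate_topology_on S' X"
  using assms by (induction rule: generate_topology_on.induct)
     (auto intro: generate_topology_on.intros)

lemma B_open_char:
  assumes "openin (B \<tau>) X"
  shows "X = UNIV \<or> (\<exists>V W. openin \<tau> V \<and> openin \<tau> W \<and> X = fVW V W)"
proof -
  have "generate_topology_on
          (insert UNIV {conc (letters U) V | U V. U \<subseteq> (UNIV :: sigma set) \<and> openin \<tau> V}) X"
    using assms unfolding B_def by (rule openin_topology_generated_by)
  then show ?thesis
  proof (induction rule: generate_topology_on.induct)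
    case Empty
    then show ?case by (rule disjI2, rule exI[of _ "{}"], rule exI[of _ "{}"]) (auto simp: fVW_mem)
  next
    case (Int X1 X2)
    show ?case
    proof (cases "X1 = UNIV \<or> X2 = UNIV")
      case True
      then show ?thesis using Int.IH by auto
    next
      case False
      then obtain V W V' W' where "openin \<tau> V" "openin \<tau> W" "openin \<tau> V'" "openin \<tau> W'"
        "X1 = fVW V W" "X2 = fVW V' W'" using Int.IH by blast
      then show ?thesis
        by (intro disjI2 exI[of _ "V \<inter> V'"] exI[of _ "W \<inter> W'"]) (auto simp: fVW_mem)
    qed
  next
    case (UN K)
    show ?case
    proof (cases "UNIV \<in> K")
      case True
      then show ?thesis by auto
    next
      case False
      have "\<forall>k\<in>K. \<exists>p. openin \<tau> (fst p) \<and> openin \<tau> (snd p) \<and> k = fVW (fst p) (snd p)"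
      proof
        fix k assume k: "k \<in> K"
        then have "k \<noteq> UNIV" using False by auto
        then obtain V W where "openin \<tau> V" "openin \<tau> W" "k = fVW V W" using UN.IH[OF k] by blast
        then show "\<exists>p. openin \<tau> (fst p) \<and> openin \<tau> (snd p) \<and> k = fVW (fst p) (snd p)"
          by (intro exI[of _ "(V, W)"]) simp
      qed
      from bchoice[OF this] obtain p where p0: "\<forall>k\<in>K. openin \<tau> (fst (p k)) \<and> openin \<tau> (snd (p k)) \<and> k = fVW (fst (p k)) (snd (p k))"
        by blast
      have p: "\<And>k. k \<in> K \<Longrightarrow> openin \<tau> (fst (p k)) \<and> openin \<tau> (snd (p k)) \<and> k = fVW (fst (p k)) (snd (p k))"
        using p0 by blast
      have "\<Union>K = fVW (\<Union>k\<in>K. fst (p k)) (\<Union>k\<in>K. snd (p k))"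
      proof
        show "\<Union>K \<subseteq> fVW (\<Union>k\<in>K. fst (p k)) (\<Union>k\<in>K. snd (p k))"
        proof
          fix x assume "x \<in> \<Union>K"
          then obtain k where k: "k \<in> K" "x \<in> k" by blast
          moreover have "k = fVW (fst (p k)) (snd (p k))" using p[OF k(1)] by blast
          ultimately have "x \<in> fVW (fst (p k)) (snd (p k))" by simp
          then show "x \<in> fVW (\<Union>k\<in>K. fst (p k)) (\<Union>k\<in>K. snd (p k))" using k by (auto simp: fVW_mem)
        qed
        show "fVW (\<Union>k\<in>K. fst (p k)) (\<Union>k\<in>K. snd (p k)) \<subseteq> \<Union>K"
        proof
          fix x assume "x \<in> fVW (\<Union>k\<in>K. fst (p k)) (\<Union>k\<in>K. snd (p k))"
          then obtain k where k: "k \<in> K" "x \<in> fVW (fst (p k)) (snd (p k))"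
            by (auto simp: fVW_mem)
          moreover have "k = fVW (fst (p k)) (snd (p k))" using p[OF k(1)] by blast
          ultimately show "x \<in> \<Union>K" by blast
        qed
      qed
      moreover have "openin \<tau> (\<Union>k\<in>K. fst (p k))" "openin \<tau> (\<Union>k\<in>K. snd (p k))"
        using p by (auto intro: openin_Union)
      ultimately show ?thesis by blast
    qed
  next
    case (Basis s)
    then show ?case
    proof
      assume "s = UNIV" then show ?thesis by simp
    next
      assume "s \<in> {conc (letters U) V | U V. U \<subseteq> (UNIV :: sigma set) \<and> openin \<tau> V}"
      then obtain U V where s: "s = conc (letters U) V" "openin \<tau> V" by blast
      have "s = fVW (if a \<in> U then V else {}) (if b \<in> U then V else {})"
        unfolding s by (rule basis_fVW)
      moreover have "openin \<tau> (if a \<in> U then V else {})" "openin \<tau> (if b \<in> U then V else {})"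
        using s(2) by auto
      ultimately show ?thesis by blast
    qed
  qed
qed

theorem mainTheorem8:
  shows "refinement_function (UNIV :: sigma list set) B"
  unfolding refinement_function_def
proof (intro conjI allI impI)
  fix \<tau> :: "sigma list topology"
  show "topspace (B \<tau>) = UNIV" unfolding B_def by auto
next
  fix \<tau> \<tau>' :: "sigma list topology" and S
  assume h: "topspace \<tau> = UNIV \<and> topspace \<tau>' = UNIV \<and> (\<forall>S. openin \<tau> S \<longrightarrow> openin \<tau>' S)"
    and o: "openin (B \<tau>) S"
  then show "openin (B \<tau>') S"
    unfolding B_def openin_topology_generated_by_iff
    by (elim gen_mono) blast
next
  fix \<tau> :: "sigma list topology"
  assume h: "topspace \<tau> = UNIV \<and> noetherian_space \<tau>"
  show "noetherian_space (B \<tau>)"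
    unfolding noetherian_space_def compactin_def
  proof (intro allI impI conjI)
    fix S :: "sigma list set" and U
    assume "S \<subseteq> topspace (B \<tau>)"
    show "S \<subseteq> topspace (B \<tau>)" by fact
    assume U: "(\<forall>X\<in>U. openin (B \<tau>) X) \<and> S \<subseteq> \<Union>U"
    show "\<exists>F. finite F \<and> F \<subseteq> U \<and> S \<subseteq> \<Union>F"
    proof (cases "UNIV \<in> U")
      case True
      then show ?thesis by (intro exI[of _ "{UNIV}"]) auto
    next
      case False
      have "\<forall>k\<in>U. \<exists>p. openin \<tau> (fst p) \<and> openin \<tau> (snd p) \<and> k = fVW (fst p) (snd p)"
      proof
        fix k assume k: "k \<in> U"
        then have "k \<noteq> UNIV" using False by auto
        moreover have "openin (B \<tau>) k" using U k by blast
        ultimately obtain V W where "openin \<tau> V" "openin \<tau> W" "k = fVW V W" using B_open_char by blast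
        then show "\<exists>p. openin \<tau> (fst p) \<and> openin \<tau> (snd p) \<and> k = fVW (fst p) (snd p)"
          by (intro exI[of _ "(V, W)"]) simp
      qed
      from bchoice[OF this] obtain p where p0: "\<forall>k\<in>U. openin \<tau> (fst (p k)) \<and> openin \<tau> (snd (p k)) \<and> k = fVW (fst (p k)) (snd (p k))"
        by blast
      have p: "\<And>k. k \<in> U \<Longrightarrow> openin \<tau> (fst (p k)) \<and> openin \<tau> (snd (p k)) \<and> k = fVW (fst (p k)) (snd (p k))"
        using p0 by blast
      define Sa where "Sa = {v. a # v \<in> S}"
      define Sb where "Sb = {v. b # v \<in> S}"
      have ca: "compactin \<tau> Sa" and cb: "compactin \<tau> Sb"
        using h unfolding noetherian_space_def by auto
      have "Sa \<subseteq> \<Union>((\<lambda>k. fst (p k)) ` U)"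
      proof
        fix v assume "v \<in> Sa"
        then obtain k where k: "k \<in> U" "a # v \<in> k" using U Sa_def by auto
        moreover have "k = fVW (fst (p k)) (snd (p k))" using p[OF k(1)] by blast
        ultimately have "a # v \<in> fVW (fst (p k)) (snd (p k))" by simp
        then have "v \<in> fst (p k)" by (simp add: fVW_mem)
        then show "v \<in> \<Union>((\<lambda>k. fst (p k)) ` U)" using k by blast
      qed
      moreover have "\<forall>B\<in>(\<lambda>k. fst (p k)) ` U. openin \<tau> B" using p by blast
      moreover have "\<forall>\<U>. (\<forall>B\<in>\<U>. openin \<tau> B) \<and> Sa \<subseteq> \<Union>\<U> \<longrightarrow> (\<exists>F. finite F \<and> F \<subseteq> \<U> \<and> Sa \<subseteq> \<Union>F)"
        using ca by (simp add: compactin_def)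
      ultimately have "\<exists>F. finite F \<and> F \<subseteq> (\<lambda>k. fst (p k)) ` U \<and> Sa \<subseteq> \<Union>F"
        by simp
      then obtain F1 where F1: "finite F1" "F1 \<subseteq> (\<lambda>k. fst (p k)) ` U" "Sa \<subseteq> \<Union>F1"
        by blast
      then obtain G1 where G1: "G1 \<subseteq> U" "finite G1" "F1 = (\<lambda>k. fst (p k)) ` G1"
        by (meson finite_subset_image)
      have "Sb \<subseteq> \<Union>((\<lambda>k. snd (p k)) ` U)"
      proof
        fix v assume "v \<in> Sb"
        then obtain k where k: "k \<in> U" "b # v \<in> k" using U Sb_def by auto
        moreover have "k = fVW (fst (p k)) (snd (p k))" using p[OF k(1)] by blast
        ultimately have "b # v \<in> fVW (fst (p k)) (snd (p k))" by simp
        then have "v \<in> snd (p k)" by (simp add: fVW_mem)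
        then show "v \<in> \<Union>((\<lambda>k. snd (p k)) ` U)" using k by blast
      qed
      moreover have "\<forall>B\<in>(\<lambda>k. snd (p k)) ` U. openin \<tau> B" using p by blast
      moreover have "\<forall>\<U>. (\<forall>B\<in>\<U>. openin \<tau> B) \<and> Sb \<subseteq> \<Union>\<U> \<longrightarrow> (\<exists>F. finite F \<and> F \<subseteq> \<U> \<and> Sb \<subseteq> \<Union>F)"
        using cb by (simp add: compactin_def)
      ultimately have "\<exists>F. finite F \<and> F \<subseteq> (\<lambda>k. snd (p k)) ` U \<and> Sb \<subseteq> \<Union>F"
        by simp
      then obtain F2 where F2: "finite F2" "F2 \<subseteq> (\<lambda>k. snd (p k)) ` U" "Sb \<subseteq> \<Union>F2"
        by blast
      then obtain G2 where G2: "G2 \<subseteq> U" "finite G2" "F2 = (\<lambda>k. snd (p k)) ` G2"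
        by (meson finite_subset_image)
      have "S \<subseteq> \<Union>(G1 \<union> G2)"
      proof
        fix x assume x: "x \<in> S"
        then obtain k where "k \<in> U" "x \<in> k" using U by auto
        moreover have "k = fVW (fst (p k)) (snd (p k))" using p[OF \<open>k \<in> U\<close>] by blast
        ultimately have "x \<in> fVW (fst (p k)) (snd (p k))" by simp
        then obtain c v where xv: "x = c # v" by (auto simp: fVW_mem)
        show "x \<in> \<Union>(G1 \<union> G2)"
        proof (cases c)
          case a
          then have "v \<in> Sa" using x xv Sa_def by auto
          then obtain g where "g \<in> G1" "v \<in> fst (p g)" using F1 G1 by auto
          then have "x \<in> fVW (fst (p g)) (snd (p g))" using xv a by (auto simp: fVW_mem)
          moreover have "g = fVW (fst (p g)) (snd (p g))" using p G1 \<open>g \<in> G1\<close> by blast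
          ultimately show ?thesis using \<open>g \<in> G1\<close> by auto
        next
          case b
          then have "v \<in> Sb" using x xv Sb_def by auto
          then obtain g where "g \<in> G2" "v \<in> snd (p g)" using F2 G2 by auto
          then have "x \<in> fVW (fst (p g)) (snd (p g))" using xv b by (auto simp: fVW_mem)
          moreover have "g = fVW (fst (p g)) (snd (p g))" using p G2 \<open>g \<in> G2\<close> by blast
          ultimately show ?thesis using \<open>g \<in> G2\<close> by auto
        qed
      qed
      then show ?thesis using G1 G2 by (intro exI[of _ "G1 \<union> G2"]) auto
    qed
  qed
qed

end
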